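(* Let $C=L_1;\ldots;L_d$ be a sorting network of depth $d\ge2$ on $n$ channels containing no redundant comparators. Then every comparator $(i,j)\in L_{d-1}$ satisfies $j-i\le3$. Furthermore, if $j=i+2$ then $(i,i+1)\in L_d$ or $(i+1,i+2)\in L_d$; and if $j=i+3$ then both $(i,i+1)\in L_d$ and $(i+2,i+3)\in L_d$.
   Context: Channels are numbered $1,\ldots,n$. A comparator network of depth $d$ is a sequence $C=L_1;\ldots;L_d$ of layers; each layer is a set of comparators $(i,j)$ with $1\le i<j\le n$, each channel occurring in at most one comparator of a layer. An input $\bar x\in\{0,1\}^n$ propagates: $\bar x_0=\bar x$, and $\bar x_k$ is obtained from $\bar x_{k-1}$ by, for each $(i,j)\in L_k$, putting the minimum of the values at positions $i,j$ at position $i$ and the maximum at position $j$. The output is $C(\bar x)=\bar x_d$; $C$ is a sorting network if $C(\bar x)$ is sorted non-decreasingly for all $\bar x\in\{0,1\}^n$. A comparator $(i,j)\in L_\ell$ is redundant if for every input $\bar x$ we have $(\bar x_{\ell-1})_i\le(\bar x_{\ell-1})_j$. *)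

theory Defs
  imports Main
begin

(* A comparator is a pair (i,j); a layer is a set of comparators;
   a network is a list of layers L_1 ... L_d (list index k-1 holds L_k).
   Inputs are functions from channels to values; a 0/1 input on n channels
   is a function x with x k \<in> {0,1} for k \<in> {1..n} (other positions are
   irrelevant and never touched). *)

type_synonym layer = "(nat \<times> nat) set"
type_synonym network = "layer list"

definition layer_ok :: "nat \<Rightarrow> layer \<Rightarrow> bool" where
  "layer_ok n L \<longleftrightarrow> finite L \<and>
     (\<forall>(i,j)\<in>L. 1 \<le> i \<and> i < j \<and> j \<le> n) \<and>
     (\<forall>c\<in>L. \<forall>c'\<in>L. c \<noteq> c' \<longrightarrow>
        {fst c, snd c} \<inter> {fst c', snd c'} = {})"

definition network_ok :: "nat \<Rightarrow> network \<Rightarrow> bool" where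
  "network_ok n C \<longleftrightarrow> (\<forall>L\<in>set C. layer_ok n L)"

definition apply_layer :: "layer \<Rightarrow> (nat \<Rightarrow> nat) \<Rightarrow> (nat \<Rightarrow> nat)" where
  "apply_layer L x = (\<lambda>k.
     if \<exists>j. (k,j) \<in> L then min (x k) (x (THE j. (k,j) \<in> L))
     else if \<exists>i. (i,k) \<in> L then max (x k) (x (THE i. (i,k) \<in> L))
     else x k)"

definition run :: "network \<Rightarrow> nat \<Rightarrow> (nat \<Rightarrow> nat) \<Rightarrow> (nat \<Rightarrow> nat)" where
  "run C k x = fold apply_layer (take k C) x"

definition binary_input :: "nat \<Rightarrow> (nat \<Rightarrow> nat) \<Rightarrow> bool" where
  "binary_input n x \<longleftrightarrow> (\<forall>k\<in>{1..n}. x k \<in> {0,1})"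

definition sorting_network :: "nat \<Rightarrow> network \<Rightarrow> bool" where
  "sorting_network n C \<longleftrightarrow> network_ok n C \<and>
     (\<forall>x. binary_input n x \<longrightarrow>
        (\<forall>i j. 1 \<le> i \<longrightarrow> i \<le> j \<longrightarrow> j \<le> n \<longrightarrow>
           run C (length C) x i \<le> run C (length C) x j))"

definition redundant :: "nat \<Rightarrow> network \<Rightarrow> nat \<Rightarrow> nat \<times> nat \<Rightarrow> bool" where
  "redundant n C l c \<longleftrightarrow> (\<forall>x. binary_input n x \<longrightarrow>
      run C (l - 1) x (fst c) \<le> run C (l - 1) x (snd c))"

definition no_redundant :: "nat \<Rightarrow> network \<Rightarrow> bool" where
  "no_redundant n C \<longleftrightarrow>
     (\<forall>l\<in>{1..length C}. \<forall>c\<in>C ! (l - 1). \<not> redundant n C l c)"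

end

theory Submission
  imports Defs
begin

definition Zc :: "nat \<Rightarrow> (nat \<Rightarrow> nat) \<Rightarrow> nat" where
  "Zc n x = card {k\<in>{1..n}. x k = 0}"

definition sorted_on :: "nat \<Rightarrow> (nat \<Rightarrow> nat) \<Rightarrow> bool" where
  "sorted_on n x \<longleftrightarrow> (\<forall>p q. 1 \<le> p \<longrightarrow> p \<le> q \<longrightarrow> q \<le> n \<longrightarrow> x p \<le> x q)"

lemma lok_uniq1:
  assumes "layer_ok n L" "(k,j) \<in> L" "(k,j') \<in> L" shows "j' = j"
proof (rule ccontr)
  assume "j' \<noteq> j"
  then have "(k,j) \<noteq> (k,j')" by simp
  with assms show False unfolding layer_ok_def by fastforce
qed

lemma lok_uniq2:
  assumes "layer_ok n L" "(i,k) \<in> L" "(i',k) \<in> L" shows "i' = i"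
proof (rule ccontr)
  assume "i' \<noteq> i"
  then have "(i,k) \<noteq> (i',k)" by simp
  with assms show False unfolding layer_ok_def by fastforce
qed

lemma lok_notboth:
  assumes "layer_ok n L" "(i,k) \<in> L" "(k,j) \<in> L" shows False
proof -
  have "i < k" using assms unfolding layer_ok_def by fastforce
  then have "(i,k) \<noteq> (k,j)" by simp
  with assms show False unfolding layer_ok_def by fastforce
qed

lemma al_lower:
  assumes "layer_ok n L" "(k,j) \<in> L"
  shows "apply_layer L x k = min (x k) (x j)"
proof -
  have "(THE j'. (k,j') \<in> L) = j"
    using assms by (intro the_equality) (auto intro: lok_uniq1)
  then show ?thesis using assms(2) by (auto simp: apply_layer_def)
qed

lemma al_upper:
  assumes "layer_ok n L" "(i,k) \<in> L"
  shows "apply_layer L x k = max (x k) (x i)"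
proof -
  have "(THE i'. (i',k) \<in> L) = i"
    using assms by (intro the_equality) (auto intro: lok_uniq2)
  moreover have "\<not> (\<exists>j. (k,j) \<in> L)" using assms lok_notboth by blast
  ultimately show ?thesis using assms(2) by (auto simp: apply_layer_def)
qed

lemma al_none:
  "\<not> (\<exists>j. (k,j) \<in> L) \<Longrightarrow> \<not> (\<exists>i. (i,k) \<in> L) \<Longrightarrow> apply_layer L x k = x k"
  by (simp add: apply_layer_def)

lemma al_ge:
  assumes "layer_ok n L" "\<not> (\<exists>j. (k,j) \<in> L)"
  shows "x k \<le> apply_layer L x k"
proof (cases "\<exists>i. (i,k) \<in> L")
  case True
  then obtain i where "(i,k) \<in> L" by blast
  then show ?thesis using al_upper[OF assms(1)] by simp
qed (use assms al_none in auto)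

lemma al_le:
  assumes "layer_ok n L" "\<not> (\<exists>i. (i,k) \<in> L)"
  shows "apply_layer L x k \<le> x k"
proof (cases "\<exists>j. (k,j) \<in> L")
  case True
  then obtain j where "(k,j) \<in> L" by blast
  then show ?thesis using al_lower[OF assms(1)] by simp
qed (use assms al_none in auto)

lemma al_mono:
  assumes "\<forall>k. x k \<le> y k"
  shows "apply_layer L x k \<le> apply_layer L y k"
proof -
  have h1: "\<And>a b. min (x a) (x b) \<le> min (y a) (y b)"
    by (rule min.mono) (simp_all add: assms)
  have h2: "\<And>a b. max (x a) (x b) \<le> max (y a) (y b)"
    by (rule max.mono) (simp_all add: assms)
  note h = h1 h2
  show ?thesis unfolding apply_layer_def using h assms
    by (simp del: min.bounded_iff max.bounded_iff min_le_iff_disj le_max_iff_disj)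
qed

lemma al_fix:
  assumes "layer_ok n L" "sorted_on n x"
  shows "apply_layer L x = x"
proof
  fix k
  show "apply_layer L x k = x k"
  proof (cases "\<exists>j. (k,j) \<in> L")
    case True
    then obtain j where j: "(k,j) \<in> L" by blast
    then have "1 \<le> k" "k < j" "j \<le> n" using assms(1) unfolding layer_ok_def by auto
    then show ?thesis using al_lower[OF assms(1) j] assms(2) unfolding sorted_on_def by simp
  next
    case False
    show ?thesis
    proof (cases "\<exists>i. (i,k) \<in> L")
      case True
      then obtain i where i: "(i,k) \<in> L" by blast
      then have "1 \<le> i" "i < k" "k \<le> n" using assms(1) unfolding layer_ok_def by auto
      then show ?thesis using al_upper[OF assms(1) i] assms(2) unfolding sorted_on_def by simp
    qed (use False al_none in auto)
  qed
qed

lemma al_bin: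
  assumes "layer_ok n L" "binary_input n x"
  shows "binary_input n (apply_layer L x)"
  unfolding binary_input_def
proof
  fix k assume k: "k \<in> {1..n}"
  show "apply_layer L x k \<in> {0,1}"
  proof (cases "\<exists>j. (k,j) \<in> L")
    case True
    then obtain j where j: "(k,j) \<in> L" by blast
    then have "j \<in> {1..n}" using assms(1) unfolding layer_ok_def by auto
    then have "x j \<in> {0,1}" "x k \<in> {0,1}" using assms(2) k unfolding binary_input_def by auto
    then show ?thesis using al_lower[OF assms(1) j] by (auto simp: min_def)
  next
    case False
    show ?thesis
    proof (cases "\<exists>i. (i,k) \<in> L")
      case True
      then obtain i where i: "(i,k) \<in> L" by blast
      then have "i \<in> {1..n}" using assms(1) unfolding layer_ok_def by auto
      then have "x i \<in> {0,1}" "x k \<in> {0,1}" using assms(2) k unfolding binary_input_def by auto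
      then show ?thesis using al_upper[OF assms(1) i] by (auto simp: max_def)
    qed (use False al_none assms(2) k in \<open>auto simp: binary_input_def\<close>)
  qed
qed

lemma sum_E:
  assumes "layer_ok n L"
  shows "(\<Sum>k\<in>(\<Union>c\<in>L. {fst c, snd c}). f k) = (\<Sum>c\<in>L. f (fst c) + f (snd c))"
proof -
  have fin: "finite L" using assms unfolding layer_ok_def by auto
  have "(\<Sum>k\<in>(\<Union>c\<in>L. {fst c, snd c}). f k) = (\<Sum>c\<in>L. (\<Sum>k\<in>{fst c, snd c}. f k))"
    by (rule sum.UNION_disjoint) (use fin assms in \<open>auto simp: layer_ok_def\<close>)
  also have "\<dots> = (\<Sum>c\<in>L. f (fst c) + f (snd c))"
  proof (rule sum.cong)
    fix c assume "c \<in> L"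
    then have "fst c \<noteq> snd c" using assms unfolding layer_ok_def by fastforce
    then show "(\<Sum>k\<in>{fst c, snd c}. f k) = f (fst c) + f (snd c)" by simp
  qed simp
  finally show ?thesis .
qed

lemma al_sum:
  assumes lok: "layer_ok n L"
  shows "(\<Sum>k\<in>{1..n}. apply_layer L x k) = (\<Sum>k\<in>{1..n}. x k)"
proof -
  define E where "E = (\<Union>c\<in>L. {fst c, snd c})"
  have sub: "E \<subseteq> {1..n}" using lok unfolding layer_ok_def E_def by fastforce
  have split: "(\<Sum>k\<in>{1..n}. f k) = (\<Sum>k\<in>{1..n} - E. f k) + (\<Sum>k\<in>E. f k)" for f :: "nat \<Rightarrow> nat"
    by (rule sum.subset_diff[OF sub]) simp
  have rest: "(\<Sum>k\<in>{1..n} - E. apply_layer L x k) = (\<Sum>k\<in>{1..n} - E. x k)"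
  proof (rule sum.cong)
    fix k assume "k \<in> {1..n} - E"
    then have "\<not> (\<exists>j. (k,j) \<in> L)" "\<not> (\<exists>i. (i,k) \<in> L)" unfolding E_def by force+
    then show "apply_layer L x k = x k" by (rule al_none)
  qed simp
  have ee: "(\<Sum>k\<in>E. apply_layer L x k) = (\<Sum>k\<in>E. x k)"
  proof -
    have "(\<Sum>k\<in>E. apply_layer L x k) = (\<Sum>c\<in>L. apply_layer L x (fst c) + apply_layer L x (snd c))"
      unfolding E_def by (rule sum_E[OF lok])
    also have "\<dots> = (\<Sum>c\<in>L. x (fst c) + x (snd c))"
    proof (rule sum.cong)
      fix c assume c: "c \<in> L"
      obtain a b where ab: "c = (a,b)" by force
      have "apply_layer L x a = min (x a) (x b)" using al_lower[OF lok] c ab by simp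
      moreover have "apply_layer L x b = max (x b) (x a)" using al_upper[OF lok] c ab by simp
      ultimately show "apply_layer L x (fst c) + apply_layer L x (snd c) = x (fst c) + x (snd c)"
        using ab by (simp add: min_def max_def)
    qed simp
    also have "\<dots> = (\<Sum>k\<in>E. x k)" unfolding E_def by (rule sum_E[OF lok, symmetric])
    finally show ?thesis .
  qed
  show ?thesis using split[of "apply_layer L x"] split[of x] rest ee by simp
qed

lemma fold_mono:
  "(\<forall>k. x k \<le> y k) \<Longrightarrow> fold apply_layer Ls x k \<le> fold apply_layer Ls y k"
proof (induction Ls arbitrary: x y)
  case Nil then show ?case by simp
next
  case (Cons L Ls)
  have "\<forall>k. apply_layer L x k \<le> apply_layer L y k" using Cons.prems al_mono by blast
  then show ?case using Cons.IH by simp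
qed

lemma fold_bin:
  "\<forall>L\<in>set Ls. layer_ok n L \<Longrightarrow> binary_input n x \<Longrightarrow> binary_input n (fold apply_layer Ls x)"
  by (induction Ls arbitrary: x) (auto intro: al_bin)

lemma fold_sum:
  "\<forall>L\<in>set Ls. layer_ok n L \<Longrightarrow> (\<Sum>k\<in>{1..n}. fold apply_layer Ls x k) = (\<Sum>k\<in>{1..n}. x k)"
proof (induction Ls arbitrary: x)
  case (Cons L Ls)
  then have "(\<Sum>k\<in>{1..n}. fold apply_layer Ls (apply_layer L x) k) = (\<Sum>k\<in>{1..n}. apply_layer L x k)"
    by simp
  also have "\<dots> = (\<Sum>k\<in>{1..n}. x k)" using Cons.prems al_sum[of n L x] by simp
  finally show ?case by simp
qed simp

lemma fold_fix:
  "\<forall>L\<in>set Ls. layer_ok n L \<Longrightarrow> sorted_on n x \<Longrightarrow> fold apply_layer Ls x = x"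
  by (induction Ls arbitrary: x) (auto simp: al_fix)

lemma run_Suc:
  "k < length C \<Longrightarrow> run C (Suc k) x = apply_layer (C!k) (run C k x)"
  by (simp add: run_def take_Suc_conv_app_nth)

lemma lok_take: "network_ok n C \<Longrightarrow> \<forall>L\<in>set (take m C). layer_ok n L"
  unfolding network_ok_def by (meson in_set_takeD)

lemma run_mono: "(\<forall>k. x k \<le> y k) \<Longrightarrow> run C m x k \<le> run C m y k"
  unfolding run_def by (rule fold_mono)

lemma run_bin: "network_ok n C \<Longrightarrow> binary_input n x \<Longrightarrow> binary_input n (run C m x)"
  unfolding run_def by (rule fold_bin[OF lok_take])

lemma run_fix: "network_ok n C \<Longrightarrow> sorted_on n x \<Longrightarrow> run C m x = x"
  unfolding run_def by (rule fold_fix[OF lok_take])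

lemma run_sum: "network_ok n C \<Longrightarrow> (\<Sum>k\<in>{1..n}. run C m x k) = (\<Sum>k\<in>{1..n}. x k)"
  unfolding run_def by (rule fold_sum[OF lok_take])

lemma bin_Zc:
  assumes "binary_input n x"
  shows "(\<Sum>k\<in>{1..n}. x k) + Zc n x = n"
proof -
  have "(\<Sum>k\<in>{1..n}. x k) = (\<Sum>k\<in>{1..n}. if x k \<noteq> 0 then 1 else 0)"
  proof (rule sum.cong)
    fix k assume "k \<in> {1..n}"
    then have "x k \<in> {0,1}" using assms by (auto simp: binary_input_def)
    then show "x k = (if x k \<noteq> 0 then 1 else 0)" by auto
  qed simp
  also have "\<dots> = card {k\<in>{1..n}. x k \<noteq> 0}"
    by (simp add: sum.If_cases, rule arg_cong[where f=card], auto)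
  finally have s: "(\<Sum>k\<in>{1..n}. x k) = card {k\<in>{1..n}. x k \<noteq> 0}" .
  have "card {k\<in>{1..n}. x k \<noteq> 0} + card {k\<in>{1..n}. x k = 0} = card ({k\<in>{1..n}. x k \<noteq> 0} \<union> {k\<in>{1..n}. x k = 0})"
    by (rule card_Un_disjoint[symmetric]) auto
  also have "{k\<in>{1..n}. x k \<noteq> 0} \<union> {k\<in>{1..n}. x k = 0} = {1..n}" by auto
  finally show ?thesis using s by (simp add: Zc_def)
qed

lemma run_Zc:
  assumes "network_ok n C" "binary_input n x"
  shows "Zc n (run C m x) = Zc n x"
  using bin_Zc[OF assms(2)] bin_Zc[OF run_bin[OF assms, of m]] run_sum[OF assms(1), of m x] by linarith

lemma sorted_char:
  assumes "binary_input n w" "sorted_on n w" "p \<in> {1..n}"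
  shows "w p = 0 \<longleftrightarrow> p \<le> Zc n w"
proof
  assume "w p = 0"
  then have "{1..p} \<subseteq> {k\<in>{1..n}. w k = 0}"
    using assms unfolding sorted_on_def by (auto, metis le_zero_eq)
  then have "card {1..p} \<le> Zc n w" unfolding Zc_def by (intro card_mono) auto
  then show "p \<le> Zc n w" by simp
next
  assume le: "p \<le> Zc n w"
  show "w p = 0"
  proof (rule ccontr)
    assume "w p \<noteq> 0"
    moreover have "w p \<in> {0,1}" using assms(1,3) by (simp add: binary_input_def)
    ultimately have "w p = 1" by auto
    have "{k\<in>{1..n}. w k = 0} \<subseteq> {1..p-1}"
    proof
      fix k assume k: "k \<in> {k\<in>{1..n}. w k = 0}"
      have "\<not> p \<le> k"
      proof
        assume "p \<le> k"
        moreover have "1 \<le> p" "k \<le> n" using assms(3) k by auto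
        ultimately have "w p \<le> w k" using assms(2) unfolding sorted_on_def by blast
        then show False using k \<open>w p = 1\<close> by simp
      qed
      then show "k \<in> {1..p-1}" using k by auto
    qed
    then have "Zc n w \<le> card {1..p-1}" unfolding Zc_def by (intro card_mono) auto
    then show False using le assms(3) by auto
  qed
qed

lemma walk:
  fixes B :: "(nat \<Rightarrow> nat) \<Rightarrow> bool"
  assumes T: "T \<le> n"
  and up: "\<And>x p. B x \<Longrightarrow> binary_input n x \<Longrightarrow> p \<in> {1..n} \<Longrightarrow> x p = 0 \<Longrightarrow> T \<le> Zc n x \<Longrightarrow> B (x(p:=1))"
  and down: "\<And>x p. B x \<Longrightarrow> binary_input n x \<Longrightarrow> p \<in> {1..n} \<Longrightarrow> x p = 1 \<Longrightarrow> Zc n x < T \<Longrightarrow> B (x(p:=0))"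
  and srt: "\<And>x. binary_input n x \<Longrightarrow> (\<forall>p\<in>{1..n}. x p = (if p \<le> T then 0 else 1)) \<Longrightarrow> \<not> B x"
  shows "binary_input n x \<Longrightarrow> \<not> B x"
proof (induction "card {p\<in>{1..n}. T < p \<and> x p = 0} + card {p\<in>{1..n}. p \<le> T \<and> x p = 1}" arbitrary: x rule: less_induct)
  case (less x)
  show ?case
  proof
    assume Bx: "B x"
    show False
    proof (cases "T \<le> Zc n x")
      case True
      show ?thesis
      proof (cases "\<exists>p\<in>{1..n}. T < p \<and> x p = 0")
        case True
        then obtain p where p: "p\<in>{1..n}" "T<p" "x p = 0" by blast
        let ?x' = "x(p:=1)"
        have B': "B ?x'" using up[OF Bx less.prems p(1) p(3) \<open>T \<le> Zc n x\<close>] .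
        have bin': "binary_input n ?x'" using less.prems by (auto simp: binary_input_def)
        have e1: "{q\<in>{1..n}. T < q \<and> ?x' q = 0} = {q\<in>{1..n}. T < q \<and> x q = 0} - {p}" by auto
        have e2: "{q\<in>{1..n}. q \<le> T \<and> ?x' q = 1} = {q\<in>{1..n}. q \<le> T \<and> x q = 1}" using p by auto
        have "card ({q\<in>{1..n}. T < q \<and> x q = 0} - {p}) < card {q\<in>{1..n}. T < q \<and> x q = 0}"
          using p by (intro card_Diff1_less) auto
        then have "card {q\<in>{1..n}. T < q \<and> ?x' q = 0} + card {q\<in>{1..n}. q \<le> T \<and> ?x' q = 1}
            < card {p\<in>{1..n}. T < p \<and> x p = 0} + card {p\<in>{1..n}. p \<le> T \<and> x p = 1}"
          unfolding e1 e2 by simp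
        from less.hyps[OF this bin'] B' show False by simp
      next
        case False
        have sub: "{k\<in>{1..n}. x k = 0} \<subseteq> {1..T}"
        proof
          fix k assume k: "k \<in> {k\<in>{1..n}. x k = 0}"
          then have "\<not> T < k" using False by blast
          then show "k \<in> {1..T}" using k by simp
        qed
        have "card {1..T} \<le> card {k\<in>{1..n}. x k = 0}" using \<open>T \<le> Zc n x\<close> by (simp add: Zc_def)
        then have eq: "{k\<in>{1..n}. x k = 0} = {1..T}" by (intro card_seteq sub) auto
        have "\<forall>p\<in>{1..n}. x p = (if p \<le> T then 0 else 1)"
        proof
          fix p assume p: "p \<in> {1..n}"
          show "x p = (if p \<le> T then 0 else 1)"
          proof (cases "p \<le> T")
            case True
            then have "p \<in> {k\<in>{1..n}. x k = 0}" using eq p by auto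
            then show ?thesis using True by simp
          next
            case F: False
            have "x p \<in> {0,1}" using less.prems p by (simp add: binary_input_def)
            moreover have "x p \<noteq> 0" using False p F by (meson not_le)
            ultimately show ?thesis using F by auto
          qed
        qed
        then show False using srt[OF less.prems] Bx by blast
      qed
    next
      case False
      have "card {q\<in>{1..T}. x q = 0} \<le> Zc n x" unfolding Zc_def using T by (intro card_mono) auto
      then have "{q\<in>{1..T}. x q = 0} \<noteq> {1..T}" using False by auto
      then obtain p where p: "p \<in> {1..T}" "x p \<noteq> 0" by blast
      then have pn: "p \<in> {1..n}" using T by auto
      have "x p \<in> {0,1}" using less.prems pn by (simp add: binary_input_def)
      then have xp: "x p = 1" using p by auto
      let ?x' = "x(p:=0)"
      have B': "B ?x'" using down[OF Bx less.prems pn xp] False by simp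
      have bin': "binary_input n ?x'" using less.prems by (auto simp: binary_input_def)
      have e1: "{q\<in>{1..n}. T < q \<and> ?x' q = 0} = {q\<in>{1..n}. T < q \<and> x q = 0}" using p by auto
      have e2: "{q\<in>{1..n}. q \<le> T \<and> ?x' q = 1} = {q\<in>{1..n}. q \<le> T \<and> x q = 1} - {p}" by auto
      have "card ({q\<in>{1..n}. q \<le> T \<and> x q = 1} - {p}) < card {q\<in>{1..n}. q \<le> T \<and> x q = 1}"
        using p pn xp by (intro card_Diff1_less) auto
      then have "card {q\<in>{1..n}. T < q \<and> ?x' q = 0} + card {q\<in>{1..n}. q \<le> T \<and> ?x' q = 1}
          < card {p\<in>{1..n}. T < p \<and> x p = 0} + card {p\<in>{1..n}. p \<le> T \<and> x p = 1}"
        unfolding e1 e2 by simp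
      from less.hyps[OF this bin'] B' show False by simp
    qed
  qed
qed

lemma Zc_up:
  assumes "p \<in> {1..n}" "x p = 0" shows "Zc n (x(p:=1)) + 1 = Zc n x"
proof -
  have e: "{k\<in>{1..n}. (x(p:=1)) k = 0} = {k\<in>{1..n}. x k = 0} - {p}" by auto
  have "p \<in> {k\<in>{1..n}. x k = 0}" using assms by auto
  then have "card ({k\<in>{1..n}. x k = 0} - {p}) + 1 = card {k\<in>{1..n}. x k = 0}"
    by (subst card_Diff_singleton) (auto simp: card_gt_0_iff intro!: Suc_pred)
  then show ?thesis unfolding Zc_def e .
qed

lemma Zc_down:
  assumes "p \<in> {1..n}" "x p = 1" shows "Zc n (x(p:=0)) = Zc n x + 1"
proof -
  have e: "{k\<in>{1..n}. (x(p:=0)) k = 0} = insert p {k\<in>{1..n}. x k = 0}" using assms by auto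
  have "p \<notin> {k\<in>{1..n}. x k = 0}" using assms by auto
  then show ?thesis unfolding Zc_def e by simp
qed

lemma bin_up: "binary_input n x \<Longrightarrow> binary_input n (x(p:=1))"
  by (auto simp: binary_input_def)
lemma bin_down: "binary_input n x \<Longrightarrow> binary_input n (x(p:=0))"
  by (auto simp: binary_input_def)

lemma out_char:
  assumes sn: "sorting_network n C" and b: "binary_input n x" and p: "p \<in> {1..n}"
  shows "run C (length C) x p = 0 \<longleftrightarrow> p \<le> Zc n x"
proof -
  have nok: "network_ok n C" using sn by (simp add: sorting_network_def)
  have "sorted_on n (run C (length C) x)" using sn b by (simp add: sorting_network_def sorted_on_def)
  then show ?thesis using sorted_char[OF run_bin[OF nok b] _ p] run_Zc[OF nok b] by simp
qed

lemma bin_val: "binary_input n x \<Longrightarrow> p \<in> {1..n} \<Longrightarrow> x p \<noteq> 0 \<Longrightarrow> x p = 1"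
  unfolding binary_input_def by (metis insert_iff singletonD)

lemma pat_sorted:
  assumes "\<forall>p\<in>{1..n}. x p = (if p \<le> T then 0 else 1)"
  shows "sorted_on n (x :: nat \<Rightarrow> nat)"
  unfolding sorted_on_def
proof (intro allI impI)
  fix p q assume "1 \<le> p" "p \<le> q" "q \<le> n"
  then show "x p \<le> x q" using assms[rule_format, of p] assms[rule_format, of q] by auto
qed

lemma nonred_witness:
  assumes nr: "no_redundant n C" and l: "l \<in> {1..length C}" and c: "(i,j) \<in> C!(l-1)"
  shows "\<exists>x. binary_input n x \<and> run C (l-1) x j < run C (l-1) x i"
  using assms unfolding no_redundant_def redundant_def by fastforce

lemma lastA:
  assumes sn: "sorting_network n C" and nr: "no_redundant n C" and d: "1 \<le> length C"
    and c: "(i,a) \<in> C!(length C - 1)"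
  shows "a = i+1"
proof (rule ccontr)
  assume ne: "a \<noteq> i+1"
  let ?d = "length C"
  have nok: "network_ok n C" using sn by (simp add: sorting_network_def)
  have lok: "layer_ok n (C!(?d-1))" using nok d unfolding network_ok_def by simp
  have ia: "1 \<le> i" "i < a" "a \<le> n" using lok c unfolding layer_ok_def by auto
  then have ia2: "i+1 < a" using ne by simp
  have runD: "run C ?d x = apply_layer (C!(?d-1)) (run C (?d-1) x)" for x
  proof -
    have e: "Suc (?d-1) = ?d" "?d - 1 < ?d" using d by auto
    show ?thesis using run_Suc[OF e(2), of x] unfolding e(1) .
  qed
  define B where "B x \<longleftrightarrow> run C (?d-1) x i = 1 \<and> run C (?d-1) x a = 0" for x
  obtain x0 where bx0: "binary_input n x0" and lt: "run C (?d-1) x0 a < run C (?d-1) x0 i"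
    using nonred_witness[OF nr _ c] d by auto
  have nb: "\<not> B x0"
  proof (rule walk[where T="i+1", OF _ _ _ _ bx0])
    show "i+1 \<le> n" using ia2 ia by simp
  next
    fix x p assume Bx: "B x" and bx: "binary_input n x" and p: "p \<in> {1..n}" "x p = 0"
      and Z: "i+1 \<le> Zc n x"
    let ?x' = "x(p:=1)"
    have mono: "\<forall>k. x k \<le> ?x' k" using p by simp
    have bx': "binary_input n ?x'" by (rule bin_up[OF bx])
    have bz': "binary_input n (run C (?d-1) ?x')" by (rule run_bin[OF nok bx'])
    have "run C (?d-1) x i \<le> run C (?d-1) ?x' i" by (rule run_mono[OF mono])
    then have "1 \<le> run C (?d-1) ?x' i" using Bx unfolding B_def by metis
    then have zi: "run C (?d-1) ?x' i = 1" using bin_val[OF bz', of i] ia by simp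
    show "B ?x'"
    proof (rule ccontr)
      assume "\<not> B ?x'"
      then have "run C (?d-1) ?x' a \<noteq> 0" using zi unfolding B_def by simp
      then have za: "run C (?d-1) ?x' a = 1" using bin_val[OF bz', of a] ia by simp
      have "i \<le> Zc n ?x'" using Zc_up[of p n x, OF p] Z by simp
      then have "run C ?d ?x' i = 0" using out_char[OF sn bx', of i] ia by simp
      moreover have "run C ?d ?x' i = 1" using runD[of ?x'] al_lower[OF lok c] zi za by simp
      ultimately show False by simp
    qed
  next
    fix x p assume Bx: "B x" and bx: "binary_input n x" and p: "p \<in> {1..n}" "x p = 1"
      and Z: "Zc n x < i+1"
    let ?x' = "x(p:=0)"
    have mono: "\<forall>k. ?x' k \<le> x k" using p by simp
    have bx': "binary_input n ?x'" by (rule bin_down[OF bx])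
    have bz': "binary_input n (run C (?d-1) ?x')" by (rule run_bin[OF nok bx'])
    have "run C (?d-1) ?x' a \<le> run C (?d-1) x a" by (rule run_mono[OF mono])
    then have za: "run C (?d-1) ?x' a = 0" using Bx unfolding B_def by simp
    show "B ?x'"
    proof (rule ccontr)
      assume "\<not> B ?x'"
      then have "run C (?d-1) ?x' i \<noteq> 1" using za unfolding B_def by simp
      then have zi: "run C (?d-1) ?x' i = 0" using bin_val[OF bz', of i] ia by auto
      have "\<not> a \<le> Zc n ?x'" using Zc_down[of p n x, OF p] Z ia2 by simp
      then have "run C ?d ?x' a \<noteq> 0" using out_char[OF sn bx', of a] ia by simp
      moreover have "run C ?d ?x' a = 0" using runD[of ?x'] al_upper[OF lok c] zi za by simp
      ultimately show False by simp
    qed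
  next
    fix x assume bx: "binary_input n x" and pat: "\<forall>p\<in>{1..n}. x p = (if p \<le> i+1 then 0 else 1)"
    have "run C (?d-1) x = x" by (rule run_fix[OF nok pat_sorted[OF pat]])
    moreover have "x i = 0" using pat ia by simp
    ultimately show "\<not> B x" unfolding B_def by simp
  qed
  have bz: "binary_input n (run C (?d-1) x0)" by (rule run_bin[OF nok bx0])
  have "B x0" using lt bin_val[OF bz, of i] bin_val[OF bz, of a] ia unfolding B_def by fastforce
  then show False using nb by simp
qed

lemma mainB:
  assumes sn: "sorting_network n C" and nr: "no_redundant n C" and d: "2 \<le> length C"
    and c: "(i,j) \<in> C!(length C - 2)"
    and tT: "1 \<le> ti" "ti < T" "T < bj" "bj \<le> n"
    and hti: "\<And>z. z i \<le> apply_layer (C!(length C - 1)) z ti"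
    and hbj: "\<And>z. apply_layer (C!(length C - 1)) z bj \<le> z j"
  shows False
proof -
  let ?d = "length C"
  let ?L = "C!(?d-2)" and ?M = "C!(?d-1)"
  have nok: "network_ok n C" using sn by (simp add: sorting_network_def)
  have lok: "layer_ok n ?L" using nok d unfolding network_ok_def by simp
  have ij: "1 \<le> i" "i < j" "j \<le> n" using lok c unfolding layer_ok_def by auto
  have runD: "run C ?d x = apply_layer ?M (run C (?d-1) x)" for x
  proof -
    have e: "Suc (?d-1) = ?d" "?d - 1 < ?d" using d by auto
    show ?thesis using run_Suc[OF e(2), of x] unfolding e(1) .
  qed
  have runD2: "run C (?d-1) x = apply_layer ?L (run C (?d-2) x)" for x
  proof -
    have e: "Suc (?d-2) = ?d-1" "?d - 2 < ?d" using d by auto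
    show ?thesis using run_Suc[OF e(2), of x] unfolding e(1) .
  qed
  define B where "B x \<longleftrightarrow> run C (?d-2) x i = 1 \<and> run C (?d-2) x j = 0" for x
  obtain x0 where bx0: "binary_input n x0" and lt: "run C (?d-2) x0 j < run C (?d-2) x0 i"
  proof -
    have "?d - 1 \<in> {1..?d}" "?d - 1 - 1 = ?d - 2" using d by auto
    from nonred_witness[OF nr this(1)] c this(2) that show ?thesis by auto
  qed
  have nb: "\<not> B x0"
  proof (rule walk[where T="T", OF _ _ _ _ bx0])
    show "T \<le> n" using tT by simp
  next
    fix x p assume Bx: "B x" and bx: "binary_input n x" and p: "p \<in> {1..n}" "x p = 0"
      and Z: "T \<le> Zc n x"
    let ?x' = "x(p:=1)"
    have mono: "\<forall>k. x k \<le> ?x' k" using p by simp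
    have bx': "binary_input n ?x'" by (rule bin_up[OF bx])
    have bz': "binary_input n (run C (?d-2) ?x')" by (rule run_bin[OF nok bx'])
    have "run C (?d-2) x i \<le> run C (?d-2) ?x' i" by (rule run_mono[OF mono])
    then have "1 \<le> run C (?d-2) ?x' i" using Bx unfolding B_def by metis
    then have zi: "run C (?d-2) ?x' i = 1" using bin_val[OF bz', of i] ij by simp
    show "B ?x'"
    proof (rule ccontr)
      assume "\<not> B ?x'"
      then have "run C (?d-2) ?x' j \<noteq> 0" using zi unfolding B_def by simp
      then have za: "run C (?d-2) ?x' j = 1" using bin_val[OF bz', of j] ij by simp
      have "ti \<le> Zc n ?x'" using Zc_up[of p n x, OF p] Z tT by simp
      then have "run C ?d ?x' ti = 0" using out_char[OF sn bx', of ti] tT by simp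
      moreover have "run C (?d-1) ?x' i = 1" using runD2[of ?x'] al_lower[OF lok c] zi za by simp
      then have "1 \<le> run C ?d ?x' ti" using runD[of ?x'] hti[of "run C (?d-1) ?x'"] by simp
      ultimately show False by simp
    qed
  next
    fix x p assume Bx: "B x" and bx: "binary_input n x" and p: "p \<in> {1..n}" "x p = 1"
      and Z: "Zc n x < T"
    let ?x' = "x(p:=0)"
    have mono: "\<forall>k. ?x' k \<le> x k" using p by simp
    have bx': "binary_input n ?x'" by (rule bin_down[OF bx])
    have bz': "binary_input n (run C (?d-2) ?x')" by (rule run_bin[OF nok bx'])
    have "run C (?d-2) ?x' j \<le> run C (?d-2) x j" by (rule run_mono[OF mono])
    then have za: "run C (?d-2) ?x' j = 0" using Bx unfolding B_def by simp
    show "B ?x'"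
    proof (rule ccontr)
      assume "\<not> B ?x'"
      then have "run C (?d-2) ?x' i \<noteq> 1" using za unfolding B_def by simp
      then have zi: "run C (?d-2) ?x' i = 0" using bin_val[OF bz', of i] ij by auto
      have "\<not> bj \<le> Zc n ?x'" using Zc_down[of p n x, OF p] Z tT by simp
      then have "run C ?d ?x' bj \<noteq> 0" using out_char[OF sn bx', of bj] tT by simp
      moreover have "run C (?d-1) ?x' j = 0" using runD2[of ?x'] al_upper[OF lok c] zi za by simp
      then have "run C ?d ?x' bj = 0" using runD[of ?x'] hbj[of "run C (?d-1) ?x'"] by simp
      ultimately show False by simp
    qed
  next
    fix x assume bx: "binary_input n x" and pat: "\<forall>p\<in>{1..n}. x p = (if p \<le> T then 0 else 1)"
    have "run C (?d-2) x = x" by (rule run_fix[OF nok pat_sorted[OF pat]])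
    moreover have "x i \<le> x j" using pat_sorted[OF pat] ij unfolding sorted_on_def by simp
    ultimately show "\<not> B x" unfolding B_def by simp
  qed
  have bz: "binary_input n (run C (?d-2) x0)" by (rule run_bin[OF nok bx0])
  have "B x0" using lt bin_val[OF bz, of i] bin_val[OF bz, of j] ij unfolding B_def by fastforce
  then show False using nb by simp
qed

theorem corollary2:
  fixes n d :: nat and C :: network
  assumes "sorting_network n C"
    and "length C = d" and "d \<ge> 2"
    and "no_redundant n C"
  shows "\<forall>(i,j)\<in>C ! (d - 2).
           j - i \<le> 3 \<and>
           (j = i + 2 \<longrightarrow> (i, i+1) \<in> C ! (d - 1) \<or> (i+1, i+2) \<in> C ! (d - 1)) \<and>
           (j = i + 3 \<longrightarrow> (i, i+1) \<in> C ! (d - 1) \<and> (i+2, i+3) \<in> C ! (d - 1))"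
proof (intro ballI, clarify)
  fix i j assume c: "(i,j) \<in> C!(d-2)"
  note sn = assms(1) and nr = assms(4)
  have dd: "2 \<le> length C" "1 \<le> length C" using assms(2,3) by auto
  have c': "(i,j) \<in> C!(length C - 2)" using c assms(2) by simp
  let ?M = "C!(d-1)"
  have nok: "network_ok n C" using sn by (simp add: sorting_network_def)
  have lokL: "layer_ok n (C!(d-2))" using nok assms(2,3) unfolding network_ok_def by simp
  have lokM: "layer_ok n ?M" using nok assms(2,3) unfolding network_ok_def by simp
  have ij: "1 \<le> i" "i < j" "j \<le> n" using lokL c unfolding layer_ok_def by auto
  have adj: "\<And>a b. (a,b) \<in> ?M \<Longrightarrow> b = a+1"
  proof -
    fix a b assume "(a,b) \<in> ?M"
    then have "(a,b) \<in> C!(length C - 1)" using assms(2) by simp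
    then show "b = a+1" by (rule lastA[OF sn nr dd(2)])
  qed
  define ti where "ti = (if (i,i+1) \<in> ?M then i+1 else i)"
  define bj where "bj = (if (j-1,j) \<in> ?M then j-1 else j)"
  have hti: "z i \<le> apply_layer ?M z ti" for z
  proof (cases "(i,i+1) \<in> ?M")
    case True
    then show ?thesis using al_upper[OF lokM True] unfolding ti_def by simp
  next
    case False
    then have "\<not> (\<exists>a. (i,a) \<in> ?M)" using adj by blast
    then show ?thesis using al_ge[OF lokM] False unfolding ti_def by simp
  qed
  have hbj: "apply_layer ?M z bj \<le> z j" for z
  proof (cases "(j-1,j) \<in> ?M")
    case True
    then show ?thesis using al_lower[OF lokM True] unfolding bj_def by simp
  next
    case False
    have "\<not> (\<exists>b. (b,j) \<in> ?M)"
    proof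
      assume "\<exists>b. (b,j) \<in> ?M"
      then obtain b where "(b,j) \<in> ?M" by blast
      then have "j = b+1" using adj by blast
      then show False using False \<open>(b,j) \<in> ?M\<close> by simp
    qed
    then show ?thesis using al_le[OF lokM] False unfolding bj_def by simp
  qed
  have ti1: "i \<le> ti" "ti \<le> i+1" unfolding ti_def by auto
  have bj1: "j-1 \<le> bj" "bj \<le> j" unfolding bj_def by auto
  have key: "\<not> (ti + 1 < bj)"
  proof
    assume lt: "ti + 1 < bj"
    have a1: "1 \<le> ti" "ti < ti + 1" "ti + 1 < bj" "bj \<le> n" using lt ti1 bj1 ij by auto
    have h1: "\<And>z. z i \<le> apply_layer (C!(length C - 1)) z ti" using hti assms(2) by simp
    have h2: "\<And>z. apply_layer (C!(length C - 1)) z bj \<le> z j" using hbj assms(2) by simp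
    show False by (rule mainB[OF sn nr dd(1) c' a1 h1 h2])
  qed
  show "j - i \<le> 3 \<and>
           (j = i + 2 \<longrightarrow> (i, i+1) \<in> ?M \<or> (i+1, i+2) \<in> ?M) \<and>
           (j = i + 3 \<longrightarrow> (i, i+1) \<in> ?M \<and> (i+2, i+3) \<in> ?M)"
  proof (intro conjI impI)
    show "j - i \<le> 3" using key ti1 bj1 by simp
  next
    assume j2: "j = i+2"
    show "(i, i+1) \<in> ?M \<or> (i+1, i+2) \<in> ?M"
    proof (rule ccontr)
      assume "\<not> ?thesis"
      then have "ti = i" "bj = j" using j2 unfolding ti_def bj_def by auto
      then show False using key j2 by simp
    qed
  next
    assume j3: "j = i+3"
    show "(i, i+1) \<in> ?M"
    proof (rule ccontr)
      assume "\<not> ?thesis"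
      then have "ti = i" unfolding ti_def by auto
      then show False using key j3 bj1 by simp
    qed
  next
    assume j3: "j = i+3"
    show "(i+2, i+3) \<in> ?M"
    proof (rule ccontr)
      assume "\<not> ?thesis"
      then have "bj = j" using j3 unfolding bj_def by auto
      then show False using key j3 ti1 by simp
    qed
  qed
qed

end
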